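(* For every simple graph $G$, $\alpha(G)\leq\vartheta^*(G)\leq\vartheta'(G)$.
   Context: Let $G=(V,E)$, $V=\{1,\dots,n\}$, have adjacency matrix $A=[a_{ij}]$ and degrees $d_j$; $\alpha(G)$ is its independence number. For $x\in\mathbb{R}^n$ and symmetric $W=[w_{ij}]\in\mathbb{R}^{n\times n}$ let $L(x,W)=\begin{bmatrix}1&x^\top\\ x&W\end{bmatrix}$ and $\mathrm{diag}(W)=(w_{11},\dots,w_{nn})$. Define $\mathrm{TH}'(G)=\{x\mid \exists$ symmetric $W$ with $\mathrm{diag}(W)=x$, $L(x,W)\succeq 0$, $w_{ij}=0$ for all $\{i,j\}\in E$, and $W\geq 0$ entrywise$\}$ and $\vartheta'(G)=\max\{\mathbf{e}^\top x\mid x\in\mathrm{TH}'(G)\}$. Let $P^*$ be the set of pairs $(x,W)$, $W$ symmetric with $\mathrm{diag}(W)=x$, satisfying for all $i,j\in V$: $w_{ij}\geq 0$; $x_i\geq w_{ij}$; $w_{ij}+1\geq x_i+x_j$; $w_{ij}-x_i+\sum_{k\in V}a_{jk}w_{ik}\geq 0$; $x_j+x_i-w_{ij}-1+\sum_{k\in V}a_{jk}(x_k-w_{ik})\geq 0$; $(d_j+1)(x_i-w_{ij})-\sum_{k\in V}a_{jk}w_{ik}\geq 0$; $(d_j+1)(1+w_{ij}-x_j-x_i)+\sum_{k\in V}a_{jk}(w_{ik}-x_k)\geq 0$. (These are the linearizations, with $x_ix_j\mapsto w_{ij}$, $x_i^2\mapsto x_i$, of products of the constraints $0\le x\le \mathbf{e}$,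 $(A+I)x-\mathbf{e}\ge 0$, $(D-I)(\mathbf{e}-x)-((A+I)x-\mathbf{e})\ge 0$ with $x_i$ and $1-x_i$, $D$ the degree diagonal matrix.) Define $\mathrm{TH}^*(G)=\{x\mid\exists$ symmetric $W$ with $\mathrm{diag}(W)=x$, $L(x,W)\succeq 0$, $(x,W)\in P^*\}$ and $\vartheta^*(G)=\max\{\mathbf{e}^\top x\mid x\in\mathrm{TH}^*(G)\}$. *)

theory Defs
  imports Complex_Main
begin

definition simple_graph :: "('n::finite \<Rightarrow> 'n \<Rightarrow> bool) \<Rightarrow> bool" where
  "simple_graph E \<longleftrightarrow> (\<forall>i j. E i j \<longleftrightarrow> E j i) \<and> (\<forall>i. \<not> E i i)"

definition adj :: "('n::finite \<Rightarrow> 'n \<Rightarrow> bool) \<Rightarrow> 'n \<Rightarrow> 'n \<Rightarrow> real" where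
  "adj E i j = (if E i j then 1 else 0)"

definition deg :: "('n::finite \<Rightarrow> 'n \<Rightarrow> bool) \<Rightarrow> 'n \<Rightarrow> real" where
  "deg E j = real (card {k. E j k})"

definition independent_set :: "('n::finite \<Rightarrow> 'n \<Rightarrow> bool) \<Rightarrow> 'n set \<Rightarrow> bool" where
  "independent_set E S \<longleftrightarrow> (\<forall>i\<in>S. \<forall>j\<in>S. \<not> E i j)"

definition independence_number :: "('n::finite \<Rightarrow> 'n \<Rightarrow> bool) \<Rightarrow> nat" where
  "independence_number E = Max {card S | S. independent_set E S}"

definition sym_mat :: "('a::finite \<Rightarrow> 'a \<Rightarrow> real) \<Rightarrow> bool" where
  "sym_mat M \<longleftrightarrow> (\<forall>i j. M i j = M j i)"

definition psd :: "('a::finite \<Rightarrow> 'a \<Rightarrow> real) \<Rightarrow> bool" where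
  "psd M \<longleftrightarrow> sym_mat M \<and> (\<forall>v. (\<Sum>i\<in>UNIV. \<Sum>j\<in>UNIV. v i * M i j * v j) \<ge> 0)"

text \<open>The bordered matrix L(x,W) = [[1, x^T],[x, W]], indexed by None (the extra row/column) and Some i.\<close>
definition Lmat :: "('n::finite \<Rightarrow> real) \<Rightarrow> ('n \<Rightarrow> 'n \<Rightarrow> real) \<Rightarrow> 'n option \<Rightarrow> 'n option \<Rightarrow> real" where
  "Lmat x W p q = (case (p, q) of
      (None, None) \<Rightarrow> 1
    | (None, Some j) \<Rightarrow> x j
    | (Some i, None) \<Rightarrow> x i
    | (Some i, Some j) \<Rightarrow> W i j)"

definition TH' :: "('n::finite \<Rightarrow> 'n \<Rightarrow> bool) \<Rightarrow> ('n \<Rightarrow> real) set" where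
  "TH' E = {x. \<exists>W. sym_mat W \<and> (\<forall>i. W i i = x i) \<and> psd (Lmat x W)
              \<and> (\<forall>i j. E i j \<longrightarrow> W i j = 0) \<and> (\<forall>i j. W i j \<ge> 0)}"

definition theta' :: "('n::finite \<Rightarrow> 'n \<Rightarrow> bool) \<Rightarrow> real" where
  "theta' E = Sup {(\<Sum>i\<in>UNIV. x i) | x. x \<in> TH' E}"

definition Pstar :: "('n::finite \<Rightarrow> 'n \<Rightarrow> bool) \<Rightarrow> ('n \<Rightarrow> real) \<Rightarrow> ('n \<Rightarrow> 'n \<Rightarrow> real) \<Rightarrow> bool" where
  "Pstar E x W \<longleftrightarrow> sym_mat W \<and> (\<forall>i. W i i = x i) \<and>
    (\<forall>i j.
       W i j \<ge> 0
     \<and> x i \<ge> W i j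
     \<and> W i j + 1 \<ge> x i + x j
     \<and> W i j - x i + (\<Sum>k\<in>UNIV. adj E j k * W i k) \<ge> 0
     \<and> x j + x i - W i j - 1 + (\<Sum>k\<in>UNIV. adj E j k * (x k - W i k)) \<ge> 0
     \<and> (deg E j + 1) * (x i - W i j) - (\<Sum>k\<in>UNIV. adj E j k * W i k) \<ge> 0
     \<and> (deg E j + 1) * (1 + W i j - x j - x i) + (\<Sum>k\<in>UNIV. adj E j k * (W i k - x k)) \<ge> 0)"

definition THstar :: "('n::finite \<Rightarrow> 'n \<Rightarrow> bool) \<Rightarrow> ('n \<Rightarrow> real) set" where
  "THstar E = {x. \<exists>W. sym_mat W \<and> (\<forall>i. W i i = x i) \<and> psd (Lmat x W) \<and> Pstar E x W}"

definition theta_star :: "('n::finite \<Rightarrow> 'n \<Rightarrow> bool) \<Rightarrow> real" where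
  "theta_star E = Sup {(\<Sum>i\<in>UNIV. x i) | x. x \<in> THstar E}"

end

theory Submission
  imports Defs
begin

lemma psd_rank1:
  fixes y :: "'a::finite \<Rightarrow> real"
  assumes "\<And>p q. M p q = y p * y q"
  shows "psd M"
proof -
  have "(\<Sum>i\<in>UNIV. \<Sum>j\<in>UNIV. v i * M i j * v j) = (\<Sum>i\<in>UNIV. v i * y i)^2" for v
    by (simp add: assms power2_eq_square sum_product algebra_simps)
  then show ?thesis unfolding psd_def sym_mat_def using assms by (simp add: mult.commute)
qed

lemma TH'_le1:
  fixes x :: "'n::finite \<Rightarrow> real"
  assumes "x \<in> TH' E" shows "x i \<le> 1"
proof -
  obtain W where W: "\<forall>i. W i i = x i" "psd (Lmat x W)" "\<forall>i j. W i j \<ge> 0"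
    using assms unfolding TH'_def by blast
  define v :: "'n option \<Rightarrow> real" where "v = (\<lambda>p. if p = None then - x i else if p = Some i then 1 else 0)"
  have U: "(UNIV :: 'n option set) = insert None (Some ` UNIV)" by (metis UNIV_option_conv)
  have sumeq: "(\<Sum>p\<in>UNIV. f p) = f None + (\<Sum>j\<in>UNIV. f (Some j))" for f :: "'n option \<Rightarrow> real"
  proof -
    have "sum f (insert None (range Some)) = f None + sum f (range Some)"
      by (rule sum.insert) auto
    also have "sum f (range Some) = (\<Sum>j\<in>UNIV. f (Some j))"
      by (simp add: sum.reindex)
    finally show ?thesis by (simp add: U)
  qed
  have s1: "(\<Sum>j\<in>UNIV. v (Some j) * g j) = g i" for g :: "_ \<Rightarrow> real"
  proof -
    have "(\<Sum>j\<in>UNIV. v (Some j) * g j) = (\<Sum>j\<in>UNIV. if j = i then g j else 0)"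
      unfolding v_def by (rule sum.cong) auto
    then show ?thesis by simp
  qed
  have s2: "(\<Sum>j\<in>UNIV. g j * v (Some j)) = g i" for g :: "_ \<Rightarrow> real"
    using s1[of g] by (simp add: mult.commute)
  have vN: "v None = - x i" by (simp add: v_def)
  define h where "h p = (\<Sum>q\<in>UNIV. Lmat x W p q * v q)" for p
  have h: "h p = Lmat x W p None * (- x i) + Lmat x W p (Some i)" for p
    unfolding h_def sumeq s2 vN by simp
  have "0 \<le> (\<Sum>p\<in>UNIV. \<Sum>q\<in>UNIV. v p * Lmat x W p q * v q)" using W(2) unfolding psd_def by blast
  also have "\<dots> = (\<Sum>p\<in>UNIV. v p * h p)"
    unfolding h_def sum_distrib_left by (simp add: mult.assoc)
  also have "\<dots> = - x i * h None + h (Some i)"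
    unfolding sumeq s1 vN by simp
  also have "\<dots> = x i - x i * x i"
    unfolding h by (simp add: Lmat_def W(1))
  finally have "0 \<le> x i * (1 - x i)" by (simp add: algebra_simps)
  moreover have "x i \<ge> 0" using W(1) W(3) by metis
  ultimately show ?thesis
  proof -
    assume a: "0 \<le> x i * (1 - x i)" "x i \<ge> 0"
    show ?thesis
    proof (rule ccontr)
      assume "\<not> x i \<le> 1"
      then have "x i * (1 - x i) < 0" by (intro mult_pos_neg) auto
      with a show False by simp
    qed
  qed
qed

lemma THstar_sub: "THstar E \<subseteq> TH' E"
proof
  fix x assume "x \<in> THstar E"
  then obtain W where W: "sym_mat W" "\<forall>i. W i i = x i" "psd (Lmat x W)" "Pstar E x W"
    unfolding THstar_def by blast
  have nn: "\<forall>i j. W i j \<ge> 0" using W(4) unfolding Pstar_def by blast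
  have "W i j = 0" if e: "E i j" for i j
  proof -
    have "(deg E i + 1) * (x i - W i i) - (\<Sum>k\<in>UNIV. adj E i k * W i k) \<ge> 0"
      using W(4) unfolding Pstar_def by blast
    then have le: "(\<Sum>k\<in>UNIV. adj E i k * W i k) \<le> 0" using W(2) by simp
    have ge: "\<forall>k\<in>UNIV. adj E i k * W i k \<ge> 0" using nn by (simp add: adj_def)
    have "(\<Sum>k\<in>UNIV. adj E i k * W i k) \<ge> 0" using ge by (simp add: sum_nonneg)
    then have "(\<Sum>k\<in>UNIV. adj E i k * W i k) = 0" using le by linarith
    then have "\<forall>k\<in>UNIV. adj E i k * W i k = 0" using ge by (simp add: sum_nonneg_eq_0_iff)
    then show ?thesis using e by (metis (full_types) adj_def mult_cancel_right1 mult_eq_0_iff iso_tuple_UNIV_I zero_neq_one)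
  qed
  then show "x \<in> TH' E" unfolding TH'_def using W nn by blast
qed

lemma TH'_bdd: "bdd_above {(\<Sum>i\<in>UNIV. x i) | x. x \<in> TH' E}"
proof (rule bdd_aboveI)
  fix s assume "s \<in> {(\<Sum>i\<in>UNIV. x i) | x. x \<in> TH' E}"
  then obtain x where "x \<in> TH' E" "s = (\<Sum>i\<in>UNIV. x i)" by blast
  moreover have "(\<Sum>i\<in>UNIV. x i) \<le> (\<Sum>i\<in>(UNIV::'a set). 1)"
    by (rule sum_mono) (rule TH'_le1[OF \<open>x \<in> TH' E\<close>])
  ultimately show "s \<le> (\<Sum>i\<in>(UNIV::'a set). 1)" by simp
qed

lemma THstar_bdd: "bdd_above {(\<Sum>i\<in>UNIV. x i) | x. x \<in> THstar E}"
  by (rule bdd_above_mono[OF TH'_bdd[of E]]) (use THstar_sub[of E] in blast)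

lemma max_indep:
  fixes E :: "'n::finite \<Rightarrow> 'n \<Rightarrow> bool"
  assumes g: "simple_graph E"
  shows "\<exists>S. independent_set E S \<and> card S = independence_number E \<and> (\<forall>j. j \<notin> S \<longrightarrow> (\<exists>k\<in>S. E j k))"
proof -
  let ?C = "{card S | S. independent_set E S}"
  have fin: "finite ?C"
    by (rule finite_subset[of _ "{..card (UNIV::'n set)}"]) (auto intro: card_mono)
  have ne: "?C \<noteq> {}" using independent_set_def by fastforce
  have "independence_number E \<in> ?C" unfolding independence_number_def using Max_in[OF fin ne] .
  then obtain S where S: "independent_set E S" "card S = independence_number E" by auto
  have "\<exists>k\<in>S. E j k" if j: "j \<notin> S" for j
  proof (rule ccontr)
    assume n: "\<not> (\<exists>k\<in>S. E j k)"
    have "independent_set E (insert j S)"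
      using S(1) n g unfolding independent_set_def simple_graph_def by blast
    then have "card (insert j S) \<in> ?C" by blast
    then have "card (insert j S) \<le> independence_number E"
      unfolding independence_number_def using fin by simp
    moreover have "card (insert j S) = card S + 1" using j by simp
    ultimately show False using S(2) by simp
  qed
  then show ?thesis using S by blast
qed

lemma indicator_THstar:
  fixes E :: "'n::finite \<Rightarrow> 'n \<Rightarrow> bool"
  assumes g: "simple_graph E" and S: "independent_set E S" and dom: "\<forall>j. j \<notin> S \<longrightarrow> (\<exists>k\<in>S. E j k)"
  shows "(\<lambda>i. if i \<in> S then 1 else 0) \<in> THstar E"
proof -
  define x :: "'n \<Rightarrow> real" where "x = (\<lambda>i. if i \<in> S then 1 else 0)"
  define W where "W = (\<lambda>i j. x i * x j)"
  define N where "N j = (\<Sum>k\<in>UNIV. adj E j k * x k)" for j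
  have x01: "x i * x i = x i" for i by (simp add: x_def)
  have Nnn: "N j \<ge> 0" for j unfolding N_def by (rule sum_nonneg) (simp add: adj_def x_def)
  have NS: "N j = 0" if "j \<in> S" for j
    unfolding N_def
  proof (rule sum.neutral, rule ballI)
    fix k :: 'n
    show "adj E j k * x k = 0"
      using S that unfolding independent_set_def adj_def x_def by auto
  qed
  have N1: "N j \<ge> 1" if "j \<notin> S" for j
  proof -
    have "\<exists>k\<in>S. E j k" using dom that by simp
    then obtain k where k: "k \<in> S" "E j k" by blast
    have "adj E j k * x k \<le> N j" unfolding N_def
      by (rule member_le_sum) (auto simp: adj_def x_def)
    then show ?thesis using k by (simp add: adj_def x_def)
  qed
  have Nd: "N j \<le> deg E j" for j
  proof -
    have "N j \<le> (\<Sum>k\<in>UNIV. adj E j k)" unfolding N_def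
      by (rule sum_mono) (simp add: adj_def x_def)
    also have "\<dots> = deg E j"
      unfolding adj_def deg_def by (simp add: sum.If_cases)
    finally show ?thesis .
  qed
  have sA: "(\<Sum>k\<in>UNIV. adj E j k * W i k) = x i * N j" for i j
  proof -
    have "(\<Sum>k\<in>UNIV. adj E j k * W i k) = (\<Sum>k\<in>UNIV. x i * (adj E j k * x k))"
      by (rule sum.cong) (simp_all add: W_def)
    then show ?thesis by (simp add: N_def sum_distrib_left)
  qed
  have sB: "(\<Sum>k\<in>UNIV. adj E j k * (x k - W i k)) = (1 - x i) * N j" for i j
  proof -
    have "(\<Sum>k\<in>UNIV. adj E j k * (x k - W i k)) = (\<Sum>k\<in>UNIV. (1 - x i) * (adj E j k * x k))"
      by (rule sum.cong) (simp_all add: W_def algebra_simps)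
    then show ?thesis by (simp add: N_def sum_distrib_left)
  qed
  have sC: "(\<Sum>k\<in>UNIV. adj E j k * (W i k - x k)) = - ((1 - x i) * N j)" for i j
  proof -
    have "(\<Sum>k\<in>UNIV. adj E j k * (W i k - x k)) = (\<Sum>k\<in>UNIV. - ((1 - x i) * (adj E j k * x k)))"
      by (rule sum.cong) (simp_all add: W_def algebra_simps)
    then show ?thesis by (simp add: N_def sum_distrib_left sum_negf)
  qed
  have P: "Pstar E x W"
    unfolding Pstar_def sA sB sC
  proof (intro conjI allI)
    show "sym_mat W" unfolding sym_mat_def W_def by simp
    fix i j
    show "W i i = x i" unfolding W_def by (simp add: x01)
    show "W i j \<ge> 0" unfolding W_def x_def by simp
    show "x i \<ge> W i j" unfolding W_def x_def by simp
    show "W i j + 1 \<ge> x i + x j" unfolding W_def x_def by simp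
    show "W i j - x i + x i * N j \<ge> 0"
      using N1[of j] Nnn[of j] NS[of j] Nd[of j] by (cases "i \<in> S"; cases "j \<in> S") (simp_all add: W_def x_def)
    show "x j + x i - W i j - 1 + (1 - x i) * N j \<ge> 0"
      using N1[of j] Nnn[of j] NS[of j] Nd[of j] by (cases "i \<in> S"; cases "j \<in> S") (simp_all add: W_def x_def)
    show "(deg E j + 1) * (x i - W i j) - x i * N j \<ge> 0"
      using N1[of j] Nnn[of j] NS[of j] Nd[of j] by (cases "i \<in> S"; cases "j \<in> S") (simp_all add: W_def x_def)
    show "(deg E j + 1) * (1 + W i j - x j - x i) + - ((1 - x i) * N j) \<ge> 0"
      using N1[of j] Nnn[of j] NS[of j] Nd[of j] by (cases "i \<in> S"; cases "j \<in> S") (simp_all add: W_def x_def)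
  qed
  define y where "y p = (case p of None \<Rightarrow> 1 | Some i \<Rightarrow> x i)" for p
  have "psd (Lmat x W)"
    by (rule psd_rank1[of _ y]) (auto simp: Lmat_def y_def W_def x01 split: option.splits)
  moreover have "sym_mat W" unfolding sym_mat_def W_def by simp
  moreover have "\<forall>i. W i i = x i" unfolding W_def by (simp add: x01)
  ultimately have "x \<in> THstar E" using P unfolding THstar_def by (intro CollectI exI[of _ W] conjI)
  then show ?thesis by (simp add: x_def)
qed

theorem theorem5:
  fixes E :: "'n::finite \<Rightarrow> 'n \<Rightarrow> bool"
  assumes "simple_graph E"
  shows "real (independence_number E) \<le> theta_star E \<and> theta_star E \<le> theta' E"
proof -
  obtain S where S: "independent_set E S" "card S = independence_number E"
    "\<forall>j. j \<notin> S \<longrightarrow> (\<exists>k\<in>S. E j k)"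
    using max_indep[OF assms] by blast
  define x :: "'n \<Rightarrow> real" where "x = (\<lambda>i. if i \<in> S then 1 else 0)"
  have xin: "x \<in> THstar E" unfolding x_def using indicator_THstar[OF assms S(1) S(3)] .
  have sx: "(\<Sum>i\<in>UNIV. x i) = real (card S)"
    unfolding x_def by (simp add: sum.If_cases)
  have mem: "(\<Sum>i\<in>UNIV. x i) \<in> {(\<Sum>i\<in>UNIV. x i) | x. x \<in> THstar E}" using xin by blast
  have 1: "real (independence_number E) \<le> theta_star E"
    unfolding theta_star_def using cSup_upper[OF mem THstar_bdd] sx S(2) by simp
  have ne: "{(\<Sum>i\<in>UNIV. x i) | x. x \<in> THstar E} \<noteq> {}" using mem by blast
  have 2: "theta_star E \<le> theta' E"
    unfolding theta_star_def theta'_def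
    by (rule cSup_subset_mono[OF ne TH'_bdd]) (use THstar_sub[of E] in blast)
  show ?thesis using 1 2 by blast
qed

end
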